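(* Let $(G,+,<)$ be an ordered abelian group (dense or discrete). Then $G$ is Dedekind complete if and only if $G$ satisfies Continuous Induction (CI).
   Context: An ordered abelian group $(G,+,<)$ is an abelian group with a linear order such that $x<y$ implies $x+z<y+z$ for all $x,y,z\in G$. A Dedekind cut is a nonempty downward closed subset $C\subseteq G$; it is proper if $C\neq G$. A gap is a proper cut with no least upper bound in $G$. $G$ is Dedekind complete if it has no gaps. Continuous Induction (CI) for $G$ is the statement: for every $S\subseteq G$, if (i) there is $g\in G$ with $(-\infty,g)\subseteq S$, and (ii) for every $x\in G$, if $(-\infty,x)\subseteq S$ then there is $y>x$ in $G$ with $(-\infty,y)\subseteq S$, then $S=G$. *)

theory Defs
  imports Main
begin

definition dedekind_cut :: "'a::linorder set \<Rightarrow> bool" where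
  "dedekind_cut C \<longleftrightarrow> C \<noteq> {} \<and> (\<forall>x\<in>C. \<forall>y. y \<le> x \<longrightarrow> y \<in> C)"

definition proper_cut :: "'a::linorder set \<Rightarrow> bool" where
  "proper_cut C \<longleftrightarrow> dedekind_cut C \<and> C \<noteq> UNIV"

definition has_lub :: "'a::linorder set \<Rightarrow> bool" where
  "has_lub C \<longleftrightarrow> (\<exists>l. (\<forall>x\<in>C. x \<le> l) \<and> (\<forall>u. (\<forall>x\<in>C. x \<le> u) \<longrightarrow> l \<le> u))"

definition gap :: "'a::linorder set \<Rightarrow> bool" where
  "gap C \<longleftrightarrow> proper_cut C \<and> \<not> has_lub C"

definition dedekind_complete :: "'a::linorder itself \<Rightarrow> bool" where
  "dedekind_complete _ \<longleftrightarrow> (\<forall>C::'a set. \<not> gap C)"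

definition continuous_induction :: "'a::linorder itself \<Rightarrow> bool" where
  "continuous_induction _ \<longleftrightarrow>
     (\<forall>S::'a set.
        (\<exists>g. {..<g} \<subseteq> S) \<and>
        (\<forall>x. {..<x} \<subseteq> S \<longrightarrow> (\<exists>y>x. {..<y} \<subseteq> S))
        \<longrightarrow> S = UNIV)"

end

theory Submission
  imports Defs
begin

lemma comp_imp_ci:
  assumes "\<forall>C::'a::linorder set. \<not> gap C"
  shows "continuous_induction TYPE('a)"
  unfolding continuous_induction_def
proof (intro allI impI)
  fix S :: "'a set"
  assume h: "(\<exists>g. {..<g} \<subseteq> S) \<and> (\<forall>x. {..<x} \<subseteq> S \<longrightarrow> (\<exists>y>x. {..<y} \<subseteq> S))"
  define C where "C = {x. {..<x} \<subseteq> S}"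
  have dc: "dedekind_cut C"
    unfolding dedekind_cut_def C_def using h by auto
  have CU: "C = UNIV"
  proof (rule ccontr)
    assume "C \<noteq> UNIV"
    with dc assms have "has_lub C" unfolding gap_def proper_cut_def by auto
    then obtain l where l1: "\<forall>x\<in>C. x \<le> l" and l2: "\<forall>u. (\<forall>x\<in>C. x \<le> u) \<longrightarrow> l \<le> u"
      unfolding has_lub_def by blast
    have "{..<l} \<subseteq> S"
    proof
      fix z assume "z \<in> {..<l}"
      hence zl: "z < l" by simp
      have "\<exists>x\<in>C. z < x"
      proof (rule ccontr)
        assume "\<not> (\<exists>x\<in>C. z < x)"
        hence "\<forall>x\<in>C. x \<le> z" by (auto simp: not_less)
        with l2 have "l \<le> z" by blast
        with zl show False by simp
      qed
      then obtain x where "x \<in> C" "z < x" by blast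
      thus "z \<in> S" unfolding C_def by auto
    qed
    with h obtain y where "y > l" "{..<y} \<subseteq> S" by blast
    hence "y \<in> C" unfolding C_def by simp
    with l1 \<open>y > l\<close> show False by force
  qed
  show "S = UNIV"
  proof
    show "UNIV \<subseteq> S"
    proof
      fix s :: 'a
      have "s \<in> C" using CU by simp
      hence "{..<s} \<subseteq> S" unfolding C_def by simp
      with h obtain y where "y > s" "{..<y} \<subseteq> S" by blast
      thus "s \<in> S" by auto
    qed
  qed simp
qed

lemma ci_imp_comp:
  assumes ci: "continuous_induction TYPE('a::linorder)"
  shows "\<not> gap (C::'a set)"
proof
  assume g: "gap C"
  hence dc: "C \<noteq> {}" "\<forall>x\<in>C. \<forall>y. y \<le> x \<longrightarrow> y \<in> C" and ne: "C \<noteq> UNIV" and nl: "\<not> has_lub C"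
    unfolding gap_def proper_cut_def dedekind_cut_def by auto
  have i: "\<exists>g. {..<g} \<subseteq> C"
  proof -
    obtain c where "c \<in> C" using dc(1) by blast
    thus ?thesis using dc(2) by (auto intro!: exI[of _ c])
  qed
  have ii: "\<forall>x. {..<x} \<subseteq> C \<longrightarrow> (\<exists>y>x. {..<y} \<subseteq> C)"
  proof (intro allI impI)
    fix x assume hx: "{..<x} \<subseteq> C"
    show "\<exists>y>x. {..<y} \<subseteq> C"
    proof (cases "x \<in> C")
      case True
      have "\<exists>y\<in>C. x < y"
      proof (rule ccontr)
        assume "\<not> (\<exists>y\<in>C. x < y)"
        hence "\<forall>y\<in>C. y \<le> x" by (auto simp: not_less)
        with True have "has_lub C" unfolding has_lub_def by blast
        with nl show False by simp
      qed
      then obtain y where "y \<in> C" "x < y" by blast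
      thus ?thesis using dc(2) by (auto intro!: exI[of _ y])
    next
      case False
      have ub: "\<forall>c\<in>C. c \<le> x"
      proof
        fix c assume "c \<in> C"
        show "c \<le> x"
        proof (rule ccontr)
          assume "\<not> c \<le> x"
          hence "x \<le> c" by simp
          with dc(2) \<open>c \<in> C\<close> False show False by blast
        qed
      qed
      have "\<forall>u. (\<forall>c\<in>C. c \<le> u) \<longrightarrow> x \<le> u"
      proof (intro allI impI)
        fix u assume hu: "\<forall>c\<in>C. c \<le> u"
        show "x \<le> u"
        proof (rule ccontr)
          assume "\<not> x \<le> u"
          hence "u < x" by simp
          hence "u \<in> C" using hx by auto
          with hu have "has_lub C" unfolding has_lub_def by blast
          with nl show False by simp
        qed
      qed
      with ub have "has_lub C" unfolding has_lub_def by blast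
      with nl show ?thesis by simp
    qed
  qed
  from ci i ii have "C = UNIV" unfolding continuous_induction_def by blast
  with ne show False by simp
qed

theorem proposition2p1:
  shows "dedekind_complete TYPE('a::linordered_ab_group_add) \<longleftrightarrow>
         continuous_induction TYPE('a)"
  using comp_imp_ci[where 'a='a] ci_imp_comp[where 'a='a]
  unfolding dedekind_complete_def by blast

end
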